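(* Consider the two-stage cooperative cellular/D2D model and the packet grouping procedure described in the context. Every coded packet in the group $\mathcal{M}_l$ cannot be sent by any single device in one D2D transmission, but it can be split into two coded packets (each an XOR of a subset of its constituent packets), each of which is held in full by some device; hence its content can be delivered to all devices over D2D links in exactly two transmission slots.
   Context: Model: a set $\mathcal{N}$ of $N\ge 2$ cooperating devices want a finite packet set $\mathcal{M}$. After a lossy first-stage cellular broadcast, device $n$ holds $\mathcal{H}_n\subseteq\mathcal{M}$ and misses $\mathcal{W}_n=\mathcal{M}\setminus\mathcal{H}_n$; every packet of $\mathcal{M}$ is wanted by some device. Over D2D, a device can broadcast to all other devices a coded packet only if it holds all uncoded packets it is composed of; a coded packet is instantly decodable for a device if it contains exactly one packet from that device's Wants set. Grouping procedure: process the packets $p_1,\dots,p_M$ of $\mathcal{M}$ in order. For $p_m$ form a vector $v_m$ of length $N$ with $v_m[n]=p_m$ if $p_m\in\mathcal{W}_n$ and $v_m[n]=\mathrm{NULL}$ otherwise. If some previously formed vector $v_{m'}$ satisfies $v_{m'}[n]=\mathrm{NULL}$ for every $n$ with $v_m[n]=p_m$, replace $v_{m'}$ by the entrywise sum $v_{m'}+v_m$ (with $p+\mathrm{NULL}=p$) and discard $v_m$; otherwise keep $v_m$. Each final vector defines a coded packet, the XOR of the distinct packets among its non-NULL entries. $\mathcal{M}_c$ consists of the coded packets of vectors whose entries are all equal and non-NULL; $\mathcal{M}_d$ of those of vectors with at least one NULL entry; $\mathcal{M}_l$ of those of the remaining vectors (no NULL entry and at least two distinct entries), i.e., each packet in $\mathcal{M}_l$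 contains exactly one packet from each $\mathcal{W}_n$ and at least two distinct packets. *)

theory Defs
  imports Main
begin

text \<open>A vector of length N is a map from
devices to packet options (None = NULL); entries outside the device set are None.
A coded packet (XOR of distinct packets) is represented by the set of its
constituent uncoded packets; XOR of coded packets built from disjoint sets
corresponds to their union.\<close>

definition wants :: "'p set \<Rightarrow> ('d \<Rightarrow> 'p set) \<Rightarrow> 'd \<Rightarrow> 'p set" where
  "wants M H n = M - H n"

definition pvec :: "'d set \<Rightarrow> 'p set \<Rightarrow> ('d \<Rightarrow> 'p set) \<Rightarrow> 'p \<Rightarrow> ('d \<Rightarrow> 'p option)" where
  "pvec N M H p = (\<lambda>n. if n \<in> N \<and> p \<in> wants M H n then Some p else None)"

definition absorbs :: "('d \<Rightarrow> 'p option) \<Rightarrow> ('d \<Rightarrow> 'p option) \<Rightarrow> bool" where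
  "absorbs v' v = (\<forall>n. v n \<noteq> None \<longrightarrow> v' n = None)"

definition vadd :: "('d \<Rightarrow> 'p option) \<Rightarrow> ('d \<Rightarrow> 'p option) \<Rightarrow> ('d \<Rightarrow> 'p option)" where
  "vadd v' v = (\<lambda>n. case v n of None \<Rightarrow> v' n | Some p \<Rightarrow> Some p)"

text \<open>The grouping procedure, processing the packet list in order. When several
previously formed vectors can absorb the new one, any of them may be chosen
(the statement is proved for every such choice).\<close>
inductive grouping :: "'d set \<Rightarrow> 'p set \<Rightarrow> ('d \<Rightarrow> 'p set) \<Rightarrow> 'p list \<Rightarrow> ('d \<Rightarrow> 'p option) list \<Rightarrow> bool"
  for N M H where
  start: "grouping N M H [] []"
| merge: "grouping N M H ps vs \<Longrightarrow> i < length vs \<Longrightarrow> absorbs (vs ! i) (pvec N M H p) \<Longrightarrow>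
          grouping N M H (ps @ [p]) (vs[i := vadd (vs ! i) (pvec N M H p)])"
| keep: "grouping N M H ps vs \<Longrightarrow> (\<forall>v\<in>set vs. \<not> absorbs v (pvec N M H p)) \<Longrightarrow>
          grouping N M H (ps @ [p]) (vs @ [pvec N M H p])"

definition vpkts :: "'d set \<Rightarrow> ('d \<Rightarrow> 'p option) \<Rightarrow> 'p set" where
  "vpkts N v = {p. \<exists>n\<in>N. v n = Some p}"

definition in_Ml :: "'d set \<Rightarrow> ('d \<Rightarrow> 'p option) \<Rightarrow> bool" where
  "in_Ml N v = ((\<forall>n\<in>N. v n \<noteq> None) \<and> (\<exists>a\<in>N. \<exists>b\<in>N. v a \<noteq> v b))"

definition can_send :: "('d \<Rightarrow> 'p set) \<Rightarrow> 'd \<Rightarrow> 'p set \<Rightarrow> bool" where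
  "can_send H n C = (C \<subseteq> H n)"

end

theory Submission
  imports Defs
begin

definition inv_g :: "'d set \<Rightarrow> 'p set \<Rightarrow> ('d \<Rightarrow> 'p set) \<Rightarrow> ('d \<Rightarrow> 'p option) \<Rightarrow> bool" where
  "inv_g N M H v = (\<forall>n p. v n = Some p \<longrightarrow> n \<in> N \<and> p \<in> wants M H n \<and>
      (\<forall>m\<in>N. p \<in> wants M H m \<longrightarrow> v m = Some p))"

lemma inv_pvec: "inv_g N M H (pvec N M H p)"
  unfolding inv_g_def pvec_def by (auto split: if_splits)

lemma inv_vadd:
  assumes "inv_g N M H w" "absorbs w (pvec N M H p)"
  shows "inv_g N M H (vadd w (pvec N M H p))"
  unfolding inv_g_def
proof (intro allI impI)
  fix n q assume h: "vadd w (pvec N M H p) n = Some q"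
  show "n \<in> N \<and> q \<in> wants M H n \<and> (\<forall>m\<in>N. q \<in> wants M H m \<longrightarrow> vadd w (pvec N M H p) m = Some q)"
  proof (cases "pvec N M H p n")
    case None
    then have wn: "w n = Some q" using h by (simp add: vadd_def)
    then have I: "n \<in> N \<and> q \<in> wants M H n \<and> (\<forall>m\<in>N. q \<in> wants M H m \<longrightarrow> w m = Some q)"
      using assms(1) unfolding inv_g_def by blast
    show ?thesis
    proof (intro conjI ballI impI)
      fix m assume m: "m \<in> N" "q \<in> wants M H m"
      then have wm: "w m = Some q" using I by blast
      have "pvec N M H p m = None"
        using assms(2) wm unfolding absorbs_def by (metis option.distinct(1))
      then show "vadd w (pvec N M H p) m = Some q" using wm by (simp add: vadd_def)
        next
      show "n \<in> N" using I by blast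
    next
      show "q \<in> wants M H n" using I by blast
    qed
  next
    case (Some r)
    then have "q = p" "n \<in> N" "p \<in> wants M H n" using h
      by (auto simp: vadd_def pvec_def split: if_splits)
    then show ?thesis by (auto simp: vadd_def pvec_def)
  qed
qed

lemma grouping_inv: "grouping N M H ps vs \<Longrightarrow> \<forall>v\<in>set vs. inv_g N M H v"
proof (induction rule: grouping.induct)
  case start then show ?case by simp
next
  case (merge ps vs i p)
  have "inv_g N M H (vs ! i)" using merge by simp
  then have "inv_g N M H (vadd (vs ! i) (pvec N M H p))" by (rule inv_vadd) (rule merge.hyps(3))
  moreover have "set (vs[i := vadd (vs ! i) (pvec N M H p)]) \<subseteq> insert (vadd (vs ! i) (pvec N M H p)) (set vs)"
    by (rule set_update_subset_insert)
  ultimately show ?case using merge.IH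
  proof -
    assume h1: "inv_g N M H (vadd (vs ! i) (pvec N M H p))"
      and h2: "set (vs[i := vadd (vs ! i) (pvec N M H p)]) \<subseteq> insert (vadd (vs ! i) (pvec N M H p)) (set vs)"
      and h3: "\<forall>a\<in>set vs. inv_g N M H a"
    show ?thesis
    proof
      fix x assume "x \<in> set (vs[i := vadd (vs ! i) (pvec N M H p)])"
      then have "x = vadd (vs ! i) (pvec N M H p) \<or> x \<in> set vs" using h2 by auto
      then show "inv_g N M H x" using h1 h3 by auto
    qed
  qed
next
  case (keep ps vs p)
  then show ?case using inv_pvec[of N M H p] by simp
qed

lemma invD1: "inv_g N M H v \<Longrightarrow> v n = Some p \<Longrightarrow> p \<in> wants M H n"
  unfolding inv_g_def by blast

lemma invD2: "inv_g N M H v \<Longrightarrow> v n = Some p \<Longrightarrow> m \<in> N \<Longrightarrow> p \<in> wants M H m \<Longrightarrow> v m = Some p"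
  unfolding inv_g_def by blast

theorem lemma1:
  fixes N :: "'d set" and M :: "'p set" and H :: "'d \<Rightarrow> 'p set"
    and ps :: "'p list" and vs :: "('d \<Rightarrow> 'p option) list" and v :: "'d \<Rightarrow> 'p option"
  assumes "finite N" and "card N \<ge> 2"
    and "distinct ps" and "set ps = M"
    and "\<forall>n\<in>N. H n \<subseteq> M"
    and "\<forall>p\<in>M. \<exists>n\<in>N. p \<in> wants M H n"
    and "grouping N M H ps vs"
    and "v \<in> set vs" and "in_Ml N v"
  shows "(\<forall>n\<in>N. \<not> can_send H n (vpkts N v))
       \<and> (\<exists>A B. A \<noteq> {} \<and> B \<noteq> {} \<and> A \<inter> B = {} \<and> A \<union> B = vpkts N v
               \<and> (\<exists>a\<in>N. can_send H a A) \<and> (\<exists>b\<in>N. can_send H b B))"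
proof -
  have I: "inv_g N M H v" using grouping_inv assms(7,8) by blast
  have full: "\<forall>n\<in>N. v n \<noteq> None" and ab: "\<exists>a\<in>N. \<exists>b\<in>N. v a \<noteq> v b"
    using assms(9) unfolding in_Ml_def by auto
  have part1: "\<forall>n\<in>N. \<not> can_send H n (vpkts N v)"
  proof
    fix n assume n: "n \<in> N"
    then obtain p where p: "v n = Some p" using full by auto
    have "p \<in> wants M H n" by (rule invD1[OF I p])
    then have "p \<notin> H n" by (simp add: wants_def)
    moreover have "p \<in> vpkts N v" using n p by (auto simp: vpkts_def)
    ultimately show "\<not> can_send H n (vpkts N v)" by (auto simp: can_send_def)
  qed
  obtain a b where a: "a \<in> N" and b: "b \<in> N" and neq: "v a \<noteq> v b" using ab by blast
  obtain p where p: "v a = Some p" using full a by auto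
  obtain q where q: "v b = Some q" using full b by auto
  have pq: "p \<noteq> q" using p q neq by simp
  have pM: "p \<in> M" using invD1[OF I p] by (simp add: wants_def)
  have pnb: "p \<notin> wants M H b"
  proof
    assume "p \<in> wants M H b"
    then have "v b = Some p" by (rule invD2[OF I p b])
    then show False using q pq by simp
  qed
  have pv: "p \<in> vpkts N v" using a p by (auto simp: vpkts_def)
  define A where "A = {p}"
  define B where "B = vpkts N v - {p}"
  have qB: "q \<in> B" using b q pq by (auto simp: B_def vpkts_def)
  have canA: "can_send H b A" using pM pnb by (auto simp: A_def can_send_def wants_def)
  have canB: "can_send H a B" unfolding can_send_def
  proof
    fix r assume r: "r \<in> B"
    then obtain m where m: "m \<in> N" "v m = Some r" "r \<noteq> p" by (auto simp: B_def vpkts_def)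
    then have rw: "r \<in> wants M H m" using invD1[OF I] by blast
    then have rM: "r \<in> M" by (simp add: wants_def)
    have "r \<notin> wants M H a"
    proof
      assume "r \<in> wants M H a"
      then have "v a = Some r" by (rule invD2[OF I m(2) a])
      then show False using p m(3) by simp
    qed
    then show "r \<in> H a" using rM by (simp add: wants_def)
  qed
  show ?thesis
    apply (rule conjI[OF part1])
    apply (rule exI[of _ A], rule exI[of _ B])
    apply (intro conjI)
    using canA canB a b qB pv by (auto simp: A_def B_def)
qed

end
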